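(* In any execution of Algorithm FS (with $T\ge 4$), let $v,w$ be active neighboring nodes in round $t$. (i) If $c_t(v)=c_t(w)+1$, then $w$ does not induce $v$ in round $t$. (ii) If $c_t(v)=c_t(w)$, then $w$ does not induce $v$ in round $t$.
   Context: Model (beeping model with arbitrary activations). $G=(V,E)$ finite connected undirected graph; synchronous rounds; in each round each active node either beeps or listens; a listening node learns only whether at least one neighbor beeped. $T\ge 4$ is an integer; checkpoints $\mathit{CP}=\{c\in\mathbb{N}_0: c\equiv 0\pmod 4,\ T-c>3\}$. Algorithm FS. Each node $v$ stores $\delta(v)\in\{0,\dots,T-1\}$, $\mathit{State}(v)\in\{\mathit{Inactive},\mathit{Beep},\mathit{Listen}\}$, $\mathit{Induced}(v)\in\{\mathit{true},\mathit{false}\}$. Initially all nodes are Inactive. A node $v$ is activated in round $t$ if the adversary activates it in round $t$, or $v$ is inactive and some neighbor beeps in round $t-1$; then at the beginning of round $t$, $\delta(v)=1$, $\mathit{State}(v)=\mathit{Beep}$, $\mathit{Induced}(v)=\mathit{true}$. In each round each active node $v$, according to its state at the beginning of the round: (1) if $\mathit{State}(v)=\mathit{Beep}$: beeps; $\delta(v)\gets\delta(v)+1\bmod T$; $\mathit{State}(v)\gets\mathit{Listen}$; (2) if $\mathit{State}(v)=\mathit{Listen}$ and some neighbor beeps: if $\delta(v)\equiv c-1\pmod T$ for some $c\in\mathit{CP}$, then $\delta(v)\gets\delta(v)+2\bmod T$, $\mathit{State}(v)\gets\mathit{Beep}$, $\mathit{Induced}(v)\gets\mathit{true}$; else $\delta(v)\gets\delta(v)+1\bmod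 T$; (3) if $\mathit{State}(v)=\mathit{Listen}$ and no neighbor beeps: $\delta(v)\gets\delta(v)+1\bmod T$; then if ($\mathit{Induced}(v)=\mathit{true}$ and new $\delta(v)\in\mathit{CP}$) or new $\delta(v)=0$: $\mathit{State}(v)\gets\mathit{Beep}$, $\mathit{Induced}(v)\gets\mathit{false}$. We say $w$ \emph{induces} $v$ in round $t$ if $w\in N(v)$ beeps in round $t$ and $v$ executes the first branch of rule (2) in round $t$. Virtual counter: if $v$ is activated in round $t_0$ then $c_{t_0}(v)=0$, and $c_{t+1}(v)=c_t(v)+a$, where $a\in\{1,2\}$ is the amount added to $\delta(v)$ (before reduction mod $T$) in round $t$. *)

theory Defs
  imports Main
begin

datatype nstate = Inactive | Beep | Listen

text \<open>Local configuration of a node: delta, State, Induced, and the virtual counter c.\<close>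
datatype cfg = Cfg (delta: nat) (st: nstate) (ind: bool) (ctr: nat)

definition CP :: "nat \<Rightarrow> nat set" where
  "CP T = {c. c mod 4 = 0 \<and> int T - int c > 3}"

definition at_cp_minus_1 :: "nat \<Rightarrow> nat \<Rightarrow> bool" where
  "at_cp_minus_1 T d \<longleftrightarrow> (\<exists>c\<in>CP T. int d mod int T = (int c - 1) mod int T)"

text \<open>One round of Algorithm FS for a single node; nb = some neighbor beeps in this round.
  The virtual counter is increased by the amount added to delta.\<close>
fun fs_step :: "nat \<Rightarrow> bool \<Rightarrow> cfg \<Rightarrow> cfg" where
  "fs_step T nb (Cfg d Inactive i k) = Cfg d Inactive i k"
| "fs_step T nb (Cfg d Beep i k) = Cfg ((d + 1) mod T) Listen i (k + 1)"
| "fs_step T nb (Cfg d Listen i k) =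
     (if nb then
        (if at_cp_minus_1 T d then Cfg ((d + 2) mod T) Beep True (k + 2)
         else Cfg ((d + 1) mod T) Listen i (k + 1))
      else
        (let d' = (d + 1) mod T in
         if (i \<and> d' \<in> CP T) \<or> d' = 0 then Cfg d' Beep False (k + 1)
         else Cfg d' Listen i (k + 1)))"

definition activated :: cfg where
  "activated = Cfg 1 Beep True 0"

definition inactive_cfg :: cfg where
  "inactive_cfg = Cfg 0 Inactive False 0"

text \<open>Execution of FS: exec T E adv t v is the configuration of v at the beginning of round t.
  adv t v means the adversary activates v in round t (effective only if v is inactive).\<close>
primrec exec :: "nat \<Rightarrow> ('v \<Rightarrow> 'v \<Rightarrow> bool) \<Rightarrow> (nat \<Rightarrow> 'v \<Rightarrow> bool) \<Rightarrow> nat \<Rightarrow> 'v \<Rightarrow> cfg" where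
  "exec T E adv 0 = (\<lambda>v. if adv 0 v then activated else inactive_cfg)"
| "exec T E adv (Suc t) =
     (\<lambda>v. let nb = (\<exists>u. E v u \<and> st (exec T E adv t u) = Beep);
              c' = fs_step T nb (exec T E adv t v)
          in if st c' = Inactive \<and> (adv (Suc t) v \<or> nb) then activated else c')"

definition active :: "nat \<Rightarrow> ('v \<Rightarrow> 'v \<Rightarrow> bool) \<Rightarrow> (nat \<Rightarrow> 'v \<Rightarrow> bool) \<Rightarrow> nat \<Rightarrow> 'v \<Rightarrow> bool" where
  "active T E adv t v \<longleftrightarrow> st (exec T E adv t v) \<noteq> Inactive"

text \<open>w induces v in round t: w is a neighbor of v beeping in round t and v executes the
  first branch of rule (2) in round t.\<close>
definition induces :: "nat \<Rightarrow> ('v \<Rightarrow> 'v \<Rightarrow> bool) \<Rightarrow> (nat \<Rightarrow> 'v \<Rightarrow> bool) \<Rightarrow> nat \<Rightarrow> 'v \<Rightarrow> 'v \<Rightarrow> bool" where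
  "induces T E adv t w v \<longleftrightarrow>
     E v w \<and> st (exec T E adv t w) = Beep \<and>
     st (exec T E adv t v) = Listen \<and> at_cp_minus_1 T (delta (exec T E adv t v))"

definition connected_graph :: "'v set \<Rightarrow> ('v \<Rightarrow> 'v \<Rightarrow> bool) \<Rightarrow> bool" where
  "connected_graph V E \<longleftrightarrow> finite V \<and> V \<noteq> {} \<and>
     (\<forall>u v. E u v \<longrightarrow> u \<in> V \<and> v \<in> V \<and> u \<noteq> v \<and> E v u) \<and>
     (\<forall>u\<in>V. \<forall>v\<in>V. E\<^sup>*\<^sup>* u v)"

end

theory Submission
  imports Defs
begin

definition P :: "nat \<Rightarrow> cfg \<Rightarrow> bool" where
  "P T c \<longleftrightarrow> (st c \<noteq> Inactive \<longrightarrow> delta c = (ctr c + 1) mod T) \<and>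
     (st c = Beep \<longrightarrow> (delta c \<in> CP T \<or> (delta c \<ge> 1 \<and> delta c - 1 \<in> CP T)))"

lemma zero_CP: "T \<ge> 4 \<Longrightarrow> 0 \<in> CP T"
  by (simp add: CP_def)

lemma cp_lt: "c \<in> CP T \<Longrightarrow> c + 3 < T"
  by (simp add: CP_def)

lemma atcp_val:
  assumes "T \<ge> 4" "d < T" "at_cp_minus_1 T d"
  shows "\<exists>c\<in>CP T. (c = 0 \<and> d = T - 1) \<or> (c \<ge> 1 \<and> d = c - 1)"
proof -
  obtain c where c: "c \<in> CP T" "int d mod int T = (int c - 1) mod int T"
    using assms(3) unfolding at_cp_minus_1_def by blast
  have lt: "c + 3 < T" using cp_lt[OF c(1)] .
  have dd: "int d mod int T = int d" using assms(2) by simp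
  show ?thesis
  proof (cases "c = 0")
    case True
    have "(int c - 1) mod int T = int T - 1" using True assms(1)
      by (simp add: zmod_minus1)
    then have "int d = int T - 1" using c(2) dd by simp
    then show ?thesis using c(1) True by auto
  next
    case False
    have "(int c - 1) mod int T = int c - 1" using False lt by simp
    then have "int d = int c - 1" using c(2) dd by simp
    then show ?thesis using c(1) False by (intro bexI[of _ c]) auto
  qed
qed

lemma step_P:
  assumes T: "T \<ge> 4" and p: "P T c"
  shows "P T (fs_step T nb c)"
proof (cases c)
  case (Cfg d s i k)
  show ?thesis
  proof (cases s)
    case Inactive
    then show ?thesis using p Cfg by (simp add: P_def)
  next
    case Beep
    then show ?thesis using p Cfg T by (simp add: P_def mod_Suc_eq)
  next
    case Listen
    have dk: "d = (k + 1) mod T" using p Cfg Listen by (simp add: P_def)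
    have dlt: "d < T" using dk T by simp
    show ?thesis
    proof (cases nb)
      case True
      show ?thesis
      proof (cases "at_cp_minus_1 T d")
        case True
        obtain cc where cc: "cc \<in> CP T" "(cc = 0 \<and> d = T - 1) \<or> (cc \<ge> 1 \<and> d = cc - 1)"
          using atcp_val[OF T dlt True] by blast
        have lt: "cc + 3 < T" using cp_lt[OF cc(1)] .
        have "(d + 2) mod T = cc + 1"
        proof (cases "cc = 0")
          case True
          then have "d = T - 1" using cc by auto
          then have "d + 2 = T + 1" using T by simp
          then show ?thesis using True T by (simp add: mod_Suc)
        next
          case False
          then have "d + 2 = cc + 1" using cc by auto
          then show ?thesis using lt by simp
        qed
        moreover have "(d + 2) mod T = (k + 3) mod T" using dk by (metis add.commute add.left_commute mod_add_right_eq numeral_Bit1 numeral_One one_add_one)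
        ultimately have x: "(k + 3) mod T = cc + 1" by linarith
        have "(k + 3) mod T - 1 \<in> CP T" "(k+3) mod T \<ge> 1" using cc(1) unfolding x by auto
        then show ?thesis using Cfg Listen \<open>nb\<close> True \<open>(d + 2) mod T = (k + 3) mod T\<close>
          by (simp add: P_def numeral_3_eq_3)
      next
        case False
        then show ?thesis using Cfg Listen \<open>nb\<close> dk by (simp add: P_def mod_Suc_eq)
      qed
    next
      case False
      have e: "(d + 1) mod T = (k + 2) mod T" using dk by (simp add: mod_Suc_eq)
      show ?thesis using Cfg Listen False e zero_CP[OF T]
        by (auto simp add: P_def Let_def)
    qed
  qed
qed

lemma P_activated: "T \<ge> 4 \<Longrightarrow> P T activated"
  by (simp add: P_def activated_def zero_CP)

lemma P_exec: "T \<ge> 4 \<Longrightarrow> P T (exec T E adv t u)"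
proof (induction t arbitrary: u)
  case 0
  show ?case
  proof (cases "adv 0 u")
    case True then show ?thesis using P_activated[OF 0] by simp
  next
    case False then show ?thesis by (simp add: inactive_cfg_def P_def)
  qed
next
  case (Suc t)
  then show ?case using step_P[OF Suc.prems Suc.IH] P_activated[OF Suc.prems]
    by (simp add: Let_def)
qed

theorem mainTheorem6:
  fixes V :: "'v set" and E :: "'v \<Rightarrow> 'v \<Rightarrow> bool" and adv :: "nat \<Rightarrow> 'v \<Rightarrow> bool"
    and T t :: nat and v w :: 'v
  assumes "T \<ge> 4"
    and "connected_graph V E"
    and "\<And>s u. adv s u \<Longrightarrow> u \<in> V"
    and "v \<in> V" and "w \<in> V" and "E v w"
    and "active T E adv t v" and "active T E adv t w"
  shows "(ctr (exec T E adv t v) = ctr (exec T E adv t w) + 1 \<longrightarrow> \<not> induces T E adv t w v)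
       \<and> (ctr (exec T E adv t v) = ctr (exec T E adv t w) \<longrightarrow> \<not> induces T E adv t w v)"
proof -
  define cv where "cv = exec T E adv t v"
  define cw where "cw = exec T E adv t w"
  have pv: "P T cv" and pw: "P T cw" using P_exec[OF assms(1)] cv_def cw_def by auto
  have av: "st cv \<noteq> Inactive" and aw: "st cw \<noteq> Inactive"
    using assms(7,8) cv_def cw_def by (auto simp: active_def)
  have dv: "delta cv = (ctr cv + 1) mod T" using pv av by (simp add: P_def)
  have dw: "delta cw = (ctr cw + 1) mod T" using pw aw by (simp add: P_def)
  have dvlt: "delta cv < T" using dv assms(1) by simp
  have key: False if ind: "induces T E adv t w v" and rel: "ctr cv = ctr cw + 1 \<or> ctr cv = ctr cw"
  proof -
    have b: "st cw = Beep" and l: "at_cp_minus_1 T (delta cv)"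
      using ind cv_def cw_def by (auto simp: induces_def)
    obtain cc where cc: "cc \<in> CP T" "(cc = 0 \<and> delta cv = T - 1) \<or> (cc \<ge> 1 \<and> delta cv = cc - 1)"
      using atcp_val[OF assms(1) dvlt l] by blast
    have ccm: "cc mod 4 = 0" using cc(1) by (simp add: CP_def)
    have wb: "delta cw \<in> CP T \<or> (delta cw \<ge> 1 \<and> delta cw - 1 \<in> CP T)" using pw b unfolding P_def by blast
    then obtain e where e: "e \<in> CP T" "delta cw = e \<or> delta cw = e + 1" by force
    have elt: "e + 3 < T" using cp_lt[OF e(1)] .
    have em: "e mod 4 = 0" using e(1) by (simp add: CP_def)
    have "delta cv = delta cw \<or> delta cv = delta cw + 1"
    proof (cases "ctr cv = ctr cw")
      case True then show ?thesis using dv dw by simp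
    next
      case False
      then have "ctr cv = ctr cw + 1" using rel by simp
      then have "delta cv = (delta cw + 1) mod T" using dv dw by (simp add: mod_Suc_eq)
      then show ?thesis using e elt by auto
    qed
    then have dvr: "delta cv = e \<or> delta cv = e + 1 \<or> delta cv = e + 2" using e(2) by auto
    show False
    proof (cases "cc = 0")
      case True
      then show False using cc(2) dvr elt by auto
    next
      case False
      then have c1: "delta cv + 1 = cc" using cc(2) by auto
      have "(delta cv + 1) mod 4 = 0" using c1 ccm by simp
      moreover have "(delta cv + 1) mod 4 \<noteq> 0" using dvr em by (auto simp: mod_add_left_eq[symmetric] mod_Suc)
      ultimately show False by simp
    qed
  qed
  show ?thesis using key cv_def cw_def by blast
qed

end
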